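(* Let $k$ and $n$ be natural numbers. Then $$A_k(n)=\tfrac12 D_k(n+1),$$ where $A_k(n):=\tfrac12\big(P_1(d,n)+P'_{k-1}(d,n)+P_2(d,n)+P''_{k-1}(d,n)\big)$.
   Context: The partition functions are defined as follows. - $P_1(d,n)$ is the number of partitions of $n$ into distinct parts whose smallest part exceeds $1$. - $P_2(d,n)$ is the number of partitions of $n$ into distinct parts for which the difference between the two smallest parts is at least $2$ (a partition with a single part counts vacuously). - $P'_{k-1}(d,n)$ is the number of partitions of $n$ in which all parts are distinct except that the smallest part is $1$ with multiplicity $k-1$. - $P''_{k-1}(d,n)$ is the number of partitions of $n$ into distinct parts except that the second smallest part appears with multiplicity $k-1$, where the difference between the two smallest parts is $1$. - $D_k(n)$ is the number of partitions of $n$ into non-negative parts (the part $0$ allowed) in which the smallest part appears exactly $k$ times and no other part is repeated, with $D_k(0)=1$. Its generating function is $\sum_{n\ge0}D_k(n)q^n=\sum_{m\ge0}q^{mk}(-q^{m+1};q)_\infty$. *)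

theory Defs
  imports Complex_Main "HOL-Library.Multiset"
begin

definition is_partition :: "nat \<Rightarrow> nat multiset \<Rightarrow> bool" where
  "is_partition n p \<longleftrightarrow> (\<forall>x\<in>#p. 0 < x) \<and> sum_mset p = n"

definition distinct_parts :: "nat multiset \<Rightarrow> bool" where
  "distinct_parts p \<longleftrightarrow> (\<forall>x. count p x \<le> 1)"

definition P1 :: "nat \<Rightarrow> nat" where
  "P1 n = card {p. is_partition n p \<and> distinct_parts p \<and> (\<forall>x\<in>#p. 1 < x)}"

text \<open>P_2(d,n): distinct parts, the two smallest parts differ by at least 2
  (vacuous if there are fewer than two parts).\<close>
definition P2 :: "nat \<Rightarrow> nat" where
  "P2 n = card {p. is_partition n p \<and> distinct_parts p \<and>
     (\<forall>a\<in>#p. \<forall>b\<in>#p. (\<forall>c\<in>#p. a \<le> c) \<and> a < b \<longrightarrow> a + 2 \<le> b)}"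

definition P' :: "nat \<Rightarrow> nat \<Rightarrow> nat" where
  "P' j n = card {p. is_partition n p \<and> count p 1 = j \<and> (\<forall>x. x \<noteq> 1 \<longrightarrow> count p x \<le> 1)}"

definition P'' :: "nat \<Rightarrow> nat \<Rightarrow> nat" where
  "P'' j n = card {p. is_partition n p \<and>
     (\<exists>a. count p a = 1 \<and> count p (a + 1) = j \<and> (\<forall>x<a. count p x = 0) \<and>
          (\<forall>x>a + 1. count p x \<le> 1))}"

text \<open>D_k(n): partitions into non-negative parts (0 allowed) whose smallest part
  occurs exactly k times and no other part is repeated.\<close>
definition D :: "nat \<Rightarrow> nat \<Rightarrow> nat" where
  "D k n = card {p :: nat multiset. sum_mset p = n \<and>
     (\<exists>m. count p m = k \<and> (\<forall>x<m. count p x = 0) \<and> (\<forall>x>m. count p x \<le> 1))}"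

definition A :: "nat \<Rightarrow> nat \<Rightarrow> real" where
  "A k n = (1/2) * real (P1 n + P' (k - 1) n + P2 n + P'' (k - 1) n)"

end

theory Submission imports Defs begin

lemma size_le_sum0: "size (p::nat multiset) \<le> sum_mset p + count p 0"
  by (induction p) auto

lemma mem_le_sum: "(x::nat) \<in># p \<Longrightarrow> x \<le> sum_mset p"
  by (auto dest!: multi_member_split)

lemma fin_bounded: "finite {p::nat multiset. sum_mset p = s \<and> count p 0 \<le> k}"
proof -
  have "{p::nat multiset. sum_mset p = s \<and> count p 0 \<le> k} \<subseteq> mset ` {xs. set xs \<subseteq> {0..s} \<and> length xs \<le> s + k}"
  proof
    fix p :: "nat multiset" assume p: "p \<in> {p. sum_mset p = s \<and> count p 0 \<le> k}"
    have "p = mset (sorted_list_of_multiset p)" by simp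
    moreover have "set (sorted_list_of_multiset p) \<subseteq> {0..s}"
      using p by (auto simp: mem_le_sum)
    moreover have "length (sorted_list_of_multiset p) \<le> s + k"
      using p size_le_sum0[of p] by (simp flip: size_mset)
    ultimately show "p \<in> mset ` {xs. set xs \<subseteq> {0..s} \<and> length xs \<le> s + k}" by blast
  qed
  moreover have "finite {xs. set xs \<subseteq> {0..s::nat} \<and> length xs \<le> s + k}"
    by (rule finite_lists_length_le) simp
  ultimately show ?thesis using finite_surj by blast
qed

lemma sum_swap: "a \<in># p \<Longrightarrow> sum_mset (add_mset b (p - {#a#})) + a = sum_mset p + (b::nat)"
  by (auto dest!: multi_member_split)

lemma min_eq: "a \<in># p \<Longrightarrow> (\<forall>x\<in>#p. a \<le> x) \<Longrightarrow> Min (set_mset p) = (a::nat)"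
  by (intro Min_eqI) auto

lemma count_one: "a \<in># p \<Longrightarrow> count p a \<le> 1 \<Longrightarrow> count p a = 1"
  using count_greater_zero_iff[of p a] by linarith

lemma diff_sum: "a \<in># p \<Longrightarrow> sum_mset (p - {#a#}) + a = sum_mset (p::nat multiset)"
  by (auto dest!: multi_member_split)

lemma mem_diff_ne: "x \<in># p - {#a#} \<Longrightarrow> count p a = 1 \<Longrightarrow> x \<noteq> a"
  using count_greater_zero_iff[of "p - {#a#}" x] by auto

lemma cnt_pos: "count p a = k \<Longrightarrow> 0 < k \<Longrightarrow> a \<in># p"
  using count_greater_zero_iff[of p a] by simp

lemma ip_zero: "\<forall>x\<in>#p. 0 < x \<Longrightarrow> count p (0::nat) = 0"
  by (auto simp: count_eq_zero_iff)

lemma sum_filter_pos: "sum_mset (filter_mset (\<lambda>x. 0 < x) p) = sum_mset (p::nat multiset)"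
  by (induction p) auto

lemma step1: "card {p. is_partition n p \<and> distinct_parts p \<and> (\<forall>x\<in>#p. 1 < x)} =
  card {p. is_partition (n+1) p \<and> distinct_parts p \<and> 1 \<in># p}"
proof (rule bij_betw_same_card[of "\<lambda>p. add_mset 1 p"], rule bij_betw_byWitness[where f'="\<lambda>p. p - {#1#}"])
  show "\<forall>a\<in>{p. is_partition n p \<and> distinct_parts p \<and> (\<forall>x\<in>#p. 1 < x)}. add_mset 1 a - {#1#} = a" by simp
  show "\<forall>a\<in>{p. is_partition (n+1) p \<and> distinct_parts p \<and> 1 \<in># p}. add_mset 1 (a - {#1#}) = a" by simp
  show "add_mset 1 ` {p. is_partition n p \<and> distinct_parts p \<and> (\<forall>x\<in>#p. 1 < x)}
    \<subseteq> {p. is_partition (n+1) p \<and> distinct_parts p \<and> 1 \<in># p}"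
  proof clarify
    fix p assume p: "is_partition n p" "distinct_parts p" "\<forall>x\<in>#p. 1 < x"
    have "count p 1 = 0" using p(3) by (auto simp: count_eq_zero_iff)
    then show "is_partition (n+1) (add_mset 1 p) \<and> distinct_parts (add_mset 1 p) \<and> 1 \<in># add_mset 1 p"
      using p unfolding is_partition_def distinct_parts_def by auto
  qed
  show "(\<lambda>p. p - {#1#}) ` {p. is_partition (n+1) p \<and> distinct_parts p \<and> 1 \<in># p}
    \<subseteq> {p. is_partition n p \<and> distinct_parts p \<and> (\<forall>x\<in>#p. 1 < x)}"
  proof clarify
    fix p :: "nat multiset" assume p: "is_partition (n+1) p" "distinct_parts p" "1 \<in># p"
    have c1: "count p 1 = 1" using p(2,3) unfolding distinct_parts_def by (intro count_one) auto
    have s: "sum_mset (p - {#1#}) = n" using p(1) diff_sum[OF p(3)] unfolding is_partition_def by simp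
    show "is_partition n (p - {#1#}) \<and> distinct_parts (p - {#1#}) \<and> (\<forall>x\<in>#p - {#1#}. 1 < x)"
    proof (intro conjI)
      show "is_partition n (p - {#1#})" using p(1) s unfolding is_partition_def by (auto dest: in_diffD)
      show "distinct_parts (p - {#1#})" using p(2) unfolding distinct_parts_def by (auto simp: le_diff_conv intro: le_trans)
      show "\<forall>x\<in>#p - {#1#}. 1 < x"
      proof
        fix x assume x: "x \<in># p - {#1#}"
        then have "x \<noteq> 1" using c1 by (rule mem_diff_ne)
        moreover have "0 < x" using x p(1) unfolding is_partition_def by (auto dest: in_diffD)
        ultimately show "1 < x" by simp
      qed
    qed
  qed
qed

lemma step3:
  assumes k: "2 \<le> k"
  shows "card {p. is_partition n p \<and> count p 1 = k - 1 \<and> (\<forall>x. x \<noteq> 1 \<longrightarrow> count p x \<le> 1)} =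
  card {p. is_partition (n+1) p \<and> count p 1 = k \<and> (\<forall>x>1. count p x \<le> 1)}"
proof (rule bij_betw_same_card[of "\<lambda>p. add_mset 1 p"], rule bij_betw_byWitness[where f'="\<lambda>p. p - {#1#}"])
  show "\<forall>a\<in>{p. is_partition n p \<and> count p 1 = k - 1 \<and> (\<forall>x. x \<noteq> 1 \<longrightarrow> count p x \<le> 1)}. add_mset 1 a - {#1#} = a" by simp
  show "\<forall>a\<in>{p. is_partition (n+1) p \<and> count p 1 = k \<and> (\<forall>x>1. count p x \<le> 1)}. add_mset 1 (a - {#1#}) = a"
  proof
    fix a assume "a \<in> {p. is_partition (n+1) p \<and> count p 1 = k \<and> (\<forall>x>1. count p x \<le> 1)}"
    then have "count a 1 = k" by simp
    then have "1 \<in># a" using k cnt_pos[of a 1 k] by linarith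
    then show "add_mset 1 (a - {#1#}) = a" by simp
  qed
  show "add_mset 1 ` {p. is_partition n p \<and> count p 1 = k - 1 \<and> (\<forall>x. x \<noteq> 1 \<longrightarrow> count p x \<le> 1)}
    \<subseteq> {p. is_partition (n+1) p \<and> count p 1 = k \<and> (\<forall>x>1. count p x \<le> 1)}"
    using k unfolding is_partition_def by auto
  show "(\<lambda>p. p - {#1#}) ` {p. is_partition (n+1) p \<and> count p 1 = k \<and> (\<forall>x>1. count p x \<le> 1)}
    \<subseteq> {p. is_partition n p \<and> count p 1 = k - 1 \<and> (\<forall>x. x \<noteq> 1 \<longrightarrow> count p x \<le> 1)}"
  proof
    fix q assume "q \<in> (\<lambda>p. p - {#1#}) ` {p. is_partition (n+1) p \<and> count p 1 = k \<and> (\<forall>x>1. count p x \<le> 1)}"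
    then obtain p :: "nat multiset" where p: "is_partition (n+1) p" "count p 1 = k" "\<forall>x>1. count p x \<le> 1" and q: "q = p - {#1#}" by blast
    have p1: "1 \<in># p" using p(2) k cnt_pos[of p 1 k] by linarith
    have c0: "count p 0 = 0" using p(1) unfolding is_partition_def by (rule ip_zero[OF conjunct1])
    have s: "sum_mset (p - {#1#}) = n" using p(1) diff_sum[OF p1] unfolding is_partition_def by simp
    have "is_partition n (p - {#1#}) \<and> count (p - {#1#}) 1 = k - 1 \<and> (\<forall>x. x \<noteq> 1 \<longrightarrow> count (p - {#1#}) x \<le> 1)"
    proof (intro conjI allI impI)
      show "is_partition n (p - {#1#})" using p(1) s unfolding is_partition_def by (auto dest: in_diffD)
      show "count (p - {#1#}) 1 = k - 1" using p(2) by simp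
      fix x :: nat assume "x \<noteq> 1"
      then show "count (p - {#1#}) x \<le> 1" using p(3) c0
        by (cases "x = 0") (auto simp: le_diff_conv)
    qed
    then show "q \<in> {p. is_partition n p \<and> count p 1 = k - 1 \<and> (\<forall>x. x \<noteq> 1 \<longrightarrow> count p x \<le> 1)}" unfolding q by simp
  qed
qed

definition up :: "nat multiset \<Rightarrow> nat multiset" where
  "up p = add_mset (Min (set_mset p) + 1) (p - {#Min (set_mset p)#})"
definition down :: "nat multiset \<Rightarrow> nat multiset" where
  "down p = add_mset (Min (set_mset p) - 1) (p - {#Min (set_mset p)#})"

lemma swap_mem: "x \<in># add_mset b (p - {#a#}) \<Longrightarrow> count p a = 1 \<Longrightarrow> x = b \<or> (x \<in># p \<and> x \<noteq> a)"
  using mem_diff_ne[of x p a] in_diffD[of x p "{#a#}"] by auto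

lemma swap_count: "count (add_mset b (p - {#a#})) x = (if x = b then 1 else 0) + (count p x - (if x = a then 1 else 0))"
  by simp

lemma min_mem: "p \<noteq> {#} \<Longrightarrow> Min (set_mset p) \<in># p"
  by simp

lemma min_le: "x \<in># p \<Longrightarrow> Min (set_mset p) \<le> (x::nat)"
  by simp

lemma step2:
  assumes n: "1 \<le> n"
  shows "card {p. is_partition n p \<and> distinct_parts p \<and>
     (\<forall>a\<in>#p. \<forall>b\<in>#p. (\<forall>c\<in>#p. a \<le> c) \<and> a < b \<longrightarrow> a + 2 \<le> b)} =
   card {p. is_partition (n+1) p \<and> distinct_parts p \<and> (\<forall>x\<in>#p. 1 < x)}"
  (is "card ?L = card ?R")
proof (rule bij_betw_same_card[of up], rule bij_betw_byWitness[where f'=down])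
  have fw: "Min (set_mset (up p)) = Min (set_mset p) + 1 \<and> down (up p) = p \<and> up p \<in> ?R" if pL: "p \<in> ?L" for p
  proof -
    from pL have p: "is_partition n p" "distinct_parts p"
      "\<forall>a\<in>#p. \<forall>b\<in>#p. (\<forall>c\<in>#p. a \<le> c) \<and> a < b \<longrightarrow> a + 2 \<le> b" by auto
    define a where "a = Min (set_mset p)"
    have ne: "p \<noteq> {#}" using p(1) n unfolding is_partition_def by auto
    have am: "a \<in># p" unfolding a_def using ne by simp
    have al: "\<forall>x\<in>#p. a \<le> x" unfolding a_def by simp
    have a0: "0 < a" using am p(1) unfolding is_partition_def by auto
    have ca: "count p a = 1" using am p(2) unfolding distinct_parts_def by (intro count_one) auto
    have "\<not> a + 1 \<in># p"
    proof
      assume "a + 1 \<in># p"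
      moreover have "(\<forall>c\<in>#p. a \<le> c) \<and> a < a + 1" using al by simp
      ultimately have "a + 2 \<le> a + 1" using p(3) am by blast
      then show False by simp
    qed
    then have ca1: "count p (a+1) = 0" by (simp add: count_eq_zero_iff)
    have upd: "up p = add_mset (a+1) (p - {#a#})" unfolding up_def a_def by simp
    have qm: "\<forall>x\<in># up p. a + 1 \<le> x"
    proof
      fix x assume "x \<in># up p"
      then have "x = a+1 \<or> (x \<in># p \<and> x \<noteq> a)" unfolding upd by (rule swap_mem[OF _ ca])
      then show "a + 1 \<le> x" using al by force
    qed
    have mq: "Min (set_mset (up p)) = a + 1" by (rule min_eq[OF _ qm]) (simp add: upd)
    have "down (up p) = p" unfolding down_def mq unfolding upd using am by simp
    moreover have "up p \<in> ?R"
    proof -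
      have "sum_mset (up p) = n + 1" unfolding upd using sum_swap[OF am, of "a+1"] p(1) unfolding is_partition_def by simp
      moreover have "distinct_parts (up p)" unfolding distinct_parts_def upd swap_count
        using p(2) ca ca1 unfolding distinct_parts_def by (auto simp: le_diff_conv)
      moreover have "\<forall>x\<in>#up p. 1 < x" using qm a0 by fastforce
      ultimately show ?thesis unfolding is_partition_def by auto
    qed
    ultimately show ?thesis using mq a_def by simp
  qed
  have bw: "down q \<in> ?L \<and> up (down q) = q" if qR: "q \<in> ?R" for q
  proof -
    from qR have q: "is_partition (n+1) q" "distinct_parts q" "\<forall>x\<in>#q. 1 < x" by auto
    define b where "b = Min (set_mset q)"
    have ne: "q \<noteq> {#}" using q(1) unfolding is_partition_def by auto
    have bm: "b \<in># q" unfolding b_def using ne by simp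
    have bl: "\<forall>x\<in>#q. b \<le> x" unfolding b_def by simp
    have b2: "1 < b" using bm q(3) by auto
    have cb: "count q b = 1" using bm q(2) unfolding distinct_parts_def by (intro count_one) auto
    have "\<not> b - 1 \<in># q" using bl b2 by force
    then have cb1: "count q (b-1) = 0" by (simp add: count_eq_zero_iff)
    have dd: "down q = add_mset (b-1) (q - {#b#})" unfolding down_def b_def by simp
    have rm: "\<forall>x\<in># down q. x = b - 1 \<or> b < x"
    proof
      fix x assume "x \<in># down q"
      then have "x = b-1 \<or> (x \<in># q \<and> x \<noteq> b)" unfolding dd by (rule swap_mem[OF _ cb])
      then show "x = b - 1 \<or> b < x" using bl by force
    qed
    have "\<forall>x\<in># down q. b - 1 \<le> x" using rm by force
    then have mr: "Min (set_mset (down q)) = b - 1" by (rule min_eq[rotated]) (simp add: dd)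
    have "up (down q) = q" unfolding up_def mr unfolding dd using bm b2 by simp
    moreover have "down q \<in> ?L"
    proof -
      have "sum_mset (down q) = n" using sum_swap[OF bm, of "b-1"] q(1) b2 unfolding dd is_partition_def by simp
      moreover have "\<forall>x\<in>#down q. 0 < x" using rm b2 by fastforce
      moreover have "distinct_parts (down q)" unfolding distinct_parts_def dd swap_count
        using q(2) cb cb1 unfolding distinct_parts_def by (auto simp: le_diff_conv)
      moreover have "\<forall>a\<in>#down q. \<forall>c\<in>#down q. (\<forall>e\<in>#down q. a \<le> e) \<and> a < c \<longrightarrow> a + 2 \<le> c"
      proof (intro ballI impI)
        fix a c assume a: "a \<in># down q" and c: "c \<in># down q" and h: "(\<forall>e\<in>#down q. a \<le> e) \<and> a < c"
        have "b - 1 \<in># down q" unfolding dd by simp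
        then have "a = b - 1" using h rm a by fastforce
        then show "a + 2 \<le> c" using rm c h b2 by fastforce
      qed
      ultimately show ?thesis unfolding is_partition_def by auto
    qed
    ultimately show ?thesis by simp
  qed
  show "\<forall>a\<in>?L. down (up a) = a" using fw by blast
  show "\<forall>a\<in>?R. up (down a) = a" using bw by blast
  show "up ` ?L \<subseteq> ?R" using fw by blast
  show "down ` ?R \<subseteq> ?L" using bw by blast
qed

lemma step4:
  assumes k: "2 \<le> k"
  shows "card {p. is_partition n p \<and>
     (\<exists>a. count p a = 1 \<and> count p (a + 1) = k - 1 \<and> (\<forall>x<a. count p x = 0) \<and>
          (\<forall>x>a + 1. count p x \<le> 1))} =
   card {p. is_partition (n+1) p \<and> (\<exists>m\<ge>2. count p m = k \<and> (\<forall>x<m. count p x = 0) \<and> (\<forall>x>m. count p x \<le> 1))}"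
  (is "card ?L = card ?R")
proof (rule bij_betw_same_card[of up], rule bij_betw_byWitness[where f'=down])
  have fw: "down (up p) = p \<and> up p \<in> ?R" if pL: "p \<in> ?L" for p
  proof -
    from pL obtain a where p: "is_partition n p" "count p a = 1" "count p (a + 1) = k - 1"
      "\<forall>x<a. count p x = 0" "\<forall>x>a + 1. count p x \<le> 1" by auto
    have am: "a \<in># p" using cnt_pos[OF p(2)] by simp
    have al: "\<forall>x\<in>#p. a \<le> x"
    proof
      fix x assume "x \<in># p" then have "count p x \<noteq> 0" by simp
      then show "a \<le> x" using p(4) by (cases "x < a") auto
    qed
    have a0: "0 < a" using am p(1) unfolding is_partition_def by auto
    have ma: "Min (set_mset p) = a" by (rule min_eq[OF am al])
    have upd: "up p = add_mset (a+1) (p - {#a#})" unfolding up_def ma by simp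
    have qm: "\<forall>x\<in># up p. a + 1 \<le> x"
    proof
      fix x assume "x \<in># up p"
      then have "x = a+1 \<or> (x \<in># p \<and> x \<noteq> a)" unfolding upd by (rule swap_mem[OF _ p(2)])
      then show "a + 1 \<le> x" using al by force
    qed
    have mq: "Min (set_mset (up p)) = a + 1" by (rule min_eq[OF _ qm]) (simp add: upd)
    have "down (up p) = p" unfolding down_def mq unfolding upd using am by simp
    moreover have "up p \<in> ?R"
    proof -
      have "sum_mset (up p) = n + 1" unfolding upd using sum_swap[OF am, of "a+1"] p(1) unfolding is_partition_def by simp
      moreover have "\<forall>x\<in>#up p. 0 < x" using qm by fastforce
      moreover have "count (up p) (a+1) = k" unfolding upd swap_count using p(3) k by simp
      moreover have "\<forall>x<a+1. count (up p) x = 0" unfolding upd swap_count using p(2,4) by auto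
      moreover have "\<forall>x>a+1. count (up p) x \<le> 1" unfolding upd swap_count using p(5) by auto
      moreover have "2 \<le> a + 1" using a0 by simp
      ultimately show ?thesis unfolding is_partition_def by blast
    qed
    ultimately show ?thesis by simp
  qed
  have bw: "down q \<in> ?L \<and> up (down q) = q" if qR: "q \<in> ?R" for q
  proof -
    from qR obtain b where q: "is_partition (n+1) q" "2 \<le> b" "count q b = k" "\<forall>x<b. count q x = 0" "\<forall>x>b. count q x \<le> 1" by auto
    have bm: "b \<in># q" using q(3) k cnt_pos[of q b k] by linarith
    have bl: "\<forall>x\<in>#q. b \<le> x"
    proof
      fix x assume "x \<in># q" then have "count q x \<noteq> 0" by simp
      then show "b \<le> x" using q(4) by (cases "x < b") auto
    qed
    have mb: "Min (set_mset q) = b" by (rule min_eq[OF bm bl])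
    have dd: "down q = add_mset (b-1) (q - {#b#})" unfolding down_def mb by simp
    have rm: "\<forall>x\<in># down q. b - 1 \<le> x"
    proof
      fix x assume "x \<in># down q"
      then have "x = b-1 \<or> x \<in># q" unfolding dd by (auto dest: in_diffD)
      then show "b - 1 \<le> x" using bl by force
    qed
    have mr: "Min (set_mset (down q)) = b - 1" by (rule min_eq[OF _ rm]) (simp add: dd)
    have "up (down q) = q" unfolding up_def mr unfolding dd using bm q(2) by simp
    moreover have "down q \<in> ?L"
    proof -
      have "sum_mset (down q) = n" using sum_swap[OF bm, of "b-1"] q(1) q(2) unfolding dd is_partition_def by simp
      moreover have "\<forall>x\<in>#down q. 0 < x" using rm q(2) by fastforce
      moreover have "count (down q) (b-1) = 1" unfolding dd swap_count using q(4) q(2) by simp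
      moreover have "count (down q) (b - 1 + 1) = k - 1" unfolding dd swap_count using q(3) q(2) by simp
      moreover have "\<forall>x<b-1. count (down q) x = 0" unfolding dd swap_count using q(4) by auto
      moreover have "\<forall>x>b - 1 + 1. count (down q) x \<le> 1" unfolding dd swap_count using q(5) q(2) by auto
      ultimately show ?thesis unfolding is_partition_def by blast
    qed
    ultimately show ?thesis by simp
  qed
  show "\<forall>a\<in>?L. down (up a) = a" using fw by blast
  show "\<forall>a\<in>?R. up (down a) = a" using bw by blast
  show "up ` ?L \<subseteq> ?R" using fw by blast
  show "down ` ?R \<subseteq> ?L" using bw by blast
qed

theorem theorem4:
  fixes k n :: nat
  assumes "2 \<le> k" and "1 \<le> n"
  shows "A k n = (1/2) * real (D k (n + 1))"
proof -
  note k = assms(1)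
  define Fb where "Fb = {p::nat multiset. sum_mset p = n+1 \<and> count p 0 \<le> k}"
  have finF: "finite Fb" unfolding Fb_def by (rule fin_bounded)
  define Z where "Z = {p::nat multiset. sum_mset p = n+1 \<and> count p 0 = k \<and> (\<forall>x>0. count p x \<le> 1)}"
  define E1 where "E1 = {p. is_partition (n+1) p \<and> count p 1 = k \<and> (\<forall>x>1. count p x \<le> 1)}"
  define E2 where "E2 = {p. is_partition (n+1) p \<and> (\<exists>m\<ge>2. count p m = k \<and> (\<forall>x<m. count p x = 0) \<and> (\<forall>x>m. count p x \<le> 1))}"
  define QA where "QA = {p. is_partition (n+1) p \<and> distinct_parts p \<and> 1 \<in># p}"
  define QB where "QB = {p. is_partition (n+1) p \<and> distinct_parts p \<and> (\<forall>x\<in>#p. 1 < x)}"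
  have ip0: "count p 0 = 0" if "is_partition s p" for s p
    using that ip_zero unfolding is_partition_def by simp
  have sZ: "Z \<subseteq> Fb" unfolding Z_def Fb_def by auto
  have sE1: "E1 \<subseteq> Fb" unfolding E1_def Fb_def using ip0 by (auto simp: is_partition_def)
  have sE2: "E2 \<subseteq> Fb" unfolding E2_def Fb_def using ip0 by (auto simp: is_partition_def)
  have sQA: "QA \<subseteq> Fb" unfolding QA_def Fb_def using ip0 by (auto simp: is_partition_def)
  have sQB: "QB \<subseteq> Fb" unfolding QB_def Fb_def using ip0 by (auto simp: is_partition_def)
  have Dsplit: "{p :: nat multiset. sum_mset p = n+1 \<and>
     (\<exists>m. count p m = k \<and> (\<forall>x<m. count p x = 0) \<and> (\<forall>x>m. count p x \<le> 1))} = Z \<union> (E1 \<union> E2)"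
  proof (rule set_eqI, rule iffI)
    fix p :: "nat multiset"
    assume "p \<in> {p :: nat multiset. sum_mset p = n+1 \<and>
     (\<exists>m. count p m = k \<and> (\<forall>x<m. count p x = 0) \<and> (\<forall>x>m. count p x \<le> 1))}"
    then obtain m where p: "sum_mset p = n+1" "count p m = k" "\<forall>x<m. count p x = 0" "\<forall>x>m. count p x \<le> 1" by auto
    show "p \<in> Z \<union> (E1 \<union> E2)"
    proof (cases "m = 0")
      case True then show ?thesis using p unfolding Z_def by auto
    next
      case False
      have c0: "count p 0 = 0" using p(3) False by simp
      have "\<forall>x\<in>#p. 0 < x"
      proof
        fix x assume x: "x \<in># p"
        show "0 < x"
        proof (rule ccontr)
          assume "\<not> 0 < x" then have "x = 0" by simp
          with x c0 show False using not_in_iff[of 0 p] by simp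
        qed
      qed
      then have ip: "is_partition (n+1) p" using p(1) unfolding is_partition_def by simp
      show ?thesis
      proof (cases "m = 1")
        case True
        then have "p \<in> E1" unfolding E1_def using ip p(2,4) by simp
        then show ?thesis by simp
      next
        case m1: False
        then have "2 \<le> m" using False by simp
        then have "p \<in> E2" unfolding E2_def using ip p(2,3,4) by blast
        then show ?thesis by simp
      qed
    qed
  next
    fix p :: "nat multiset"
    assume "p \<in> Z \<union> (E1 \<union> E2)"
    then show "p \<in> {p :: nat multiset. sum_mset p = n+1 \<and>
     (\<exists>m. count p m = k \<and> (\<forall>x<m. count p x = 0) \<and> (\<forall>x>m. count p x \<le> 1))}"
    proof (elim UnE)
      assume "p \<in> Z" then show ?thesis unfolding Z_def by auto
    next
      assume "p \<in> E1" then show ?thesis unfolding E1_def using ip0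
        by (auto simp: is_partition_def intro!: exI[of _ 1])
    next
      assume "p \<in> E2" then show ?thesis unfolding E2_def by (auto simp: is_partition_def)
    qed
  qed
  have dZ: "Z \<inter> (E1 \<union> E2) = {}" unfolding Z_def E1_def E2_def using ip0 k by auto
  have dE: "E1 \<inter> E2 = {}"
  proof (rule equals0I)
    fix p assume "p \<in> E1 \<inter> E2"
    then obtain m where "count p 1 = k" "2 \<le> m" "\<forall>x<m. count p x = 0" unfolding E1_def E2_def by auto
    then have "count p 1 = 0" by simp
    with \<open>count p 1 = k\<close> k show False by simp
  qed
  have dQ: "QA \<inter> QB = {}" unfolding QA_def QB_def by auto
  have cD: "D k (n+1) = card Z + card E1 + card E2"
    unfolding D_def Dsplit using finF sZ sE1 sE2 dZ dE
    by (simp add: card_Un_disjoint finite_subset finite_UnI)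
  have QU: "{p. is_partition (n+1) p \<and> distinct_parts p} = QA \<union> QB"
  proof (rule set_eqI, rule iffI)
    fix p assume "p \<in> {p. is_partition (n+1) p \<and> distinct_parts p}"
    then have p: "is_partition (n+1) p" "distinct_parts p" by auto
    show "p \<in> QA \<union> QB"
    proof (cases "1 \<in># p")
      case True then show ?thesis using p unfolding QA_def by simp
    next
      case False
      have "\<forall>x\<in>#p. 1 < x"
      proof
        fix x assume x: "x \<in># p"
        then have "x \<noteq> 1" using False by auto
        moreover have "0 < x" using x p(1) unfolding is_partition_def by simp
        ultimately show "1 < x" by simp
      qed
      then show ?thesis using p unfolding QB_def by simp
    qed
  next
    fix p assume "p \<in> QA \<union> QB"
    then show "p \<in> {p. is_partition (n+1) p \<and> distinct_parts p}" unfolding QA_def QB_def by auto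
  qed
  have cZ: "card Z = card QA + card QB"
  proof -
    have "bij_betw (\<lambda>q. q + replicate_mset k 0) (QA \<union> QB) Z"
    proof (rule bij_betw_byWitness[where f'="filter_mset (\<lambda>x. 0 < x)"])
      show "\<forall>a\<in>QA \<union> QB. filter_mset (\<lambda>x. 0 < x) (a + replicate_mset k 0) = a"
        unfolding QU[symmetric] is_partition_def using ip_zero by (auto simp: multiset_eq_iff)
      show "\<forall>a\<in>Z. filter_mset (\<lambda>x. 0 < x) a + replicate_mset k 0 = a"
        unfolding Z_def by (auto simp: multiset_eq_iff)
      show "(\<lambda>q. q + replicate_mset k 0) ` (QA \<union> QB) \<subseteq> Z"
        unfolding QU[symmetric] Z_def using ip0 by (auto simp: is_partition_def distinct_parts_def)
      show "filter_mset (\<lambda>x. 0 < x) ` Z \<subseteq> QA \<union> QB"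
      proof
        fix q assume "q \<in> filter_mset (\<lambda>x. 0 < x) ` Z"
        then obtain p where p: "p \<in> Z" and q: "q = filter_mset (\<lambda>x. 0 < x) p" by auto
        have "sum_mset q = sum_mset p" unfolding q
          by (rule sum_filter_pos)
        then show "q \<in> QA \<union> QB" using p unfolding QU[symmetric] Z_def q is_partition_def distinct_parts_def
          by auto
      qed
    qed
    then have "card Z = card (QA \<union> QB)" by (simp add: bij_betw_same_card)
    also have "\<dots> = card QA + card QB" using dQ finF sQA sQB
      by (simp add: card_Un_disjoint finite_subset)
    finally show ?thesis .
  qed
  have "P1 n = card QA" unfolding P1_def QA_def by (rule step1)
  moreover have "P2 n = card QB" unfolding P2_def QB_def by (rule step2[OF assms(2)])
  moreover have "P' (k-1) n = card E1" unfolding P'_def E1_def by (rule step3[OF k])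
  moreover have "P'' (k-1) n = card E2" unfolding P''_def E2_def by (rule step4[OF k])
  ultimately show ?thesis unfolding A_def cD cZ by simp
qed

end
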